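(* Let $H=F[1/t]\subseteq\mathbb{Q}[t,1/t]$. Then: (a) $H$ is a Hopf subalgebra of the Hopf algebra $\mathbb{Q}[t,1/t]$ with coproduct $\Delta(t)=t\otimes t$. (b) $H$ is a binomial ring; it is the free binomial ring on a unit.
   Context: $F\subseteq\mathbb{Q}[t]$ is the ring of numerical polynomials (polynomials $f$ with $f(n)\in\mathbb{Z}$ for all integers $n\gg0$), with $\mathbb{Z}$-basis $\binom tn$, $n\ge 0$; $H=F[1/t]$ is its localization at $t$, a subring of $\mathbb{Q}[t,1/t]$. A binomial ring is a subring $R$ of a $\mathbb{Q}$-algebra which is closed under the operations $r\mapsto\binom rn=r(r-1)\cdots(r-n+1)/n!$ for all $n\ge0$. "Free binomial ring on a unit" means: for every binomial ring $R$ and every unit $r\in R$ there is a unique ring homomorphism $H\to R$ sending $t$ to $r$. The Hopf algebra structure on $\mathbb{Q}[t,1/t]$ has $\Delta(t)=t\otimes t$, counit $t\mapsto1$ and antipode $t\mapsto t^{-1}$; $F\otimes F$ is identified with the ring of numerical polynomials in $\mathbb{Q}[t_1,t_2]\cong\mathbb{Q}[t]\otimes\mathbb{Q}[t]$. *)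

theory Defs
  imports "HOL-Computational_Algebra.Formal_Laurent_Series"
begin

(* Q[t,1/t] is modelled as the Laurent polynomials inside the formal Laurent series
   rat fls (t = fls_X, 1/t = fls_X_inv). *)
definition laurent_polys :: "rat fls set" where
  "laurent_polys = {f. finite {n. fls_nth f n \<noteq> 0}}"

definition numerical_polys :: "rat poly set" where
  "numerical_polys = {p. \<exists>N::int. \<forall>n::int. n \<ge> N \<longrightarrow> poly p (of_int n) \<in> \<int>}"

definition poly_to_laurent :: "rat poly \<Rightarrow> rat fls" where
  "poly_to_laurent p = fps_to_fls (fps_of_poly p)"

definition H_ring :: "rat fls set" where
  "H_ring = {poly_to_laurent p * fls_X_inv ^ k | p k. p \<in> numerical_polys}"

(* Q[t,1/t] (x) Q[t,1/t] = Q[t1^{+-1}, t2^{+-1}], represented by coefficient functions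
   (coefficient of t1^i t2^j) *)
type_synonym laurent2 = "int \<times> int \<Rightarrow> rat"

definition tensor :: "rat fls \<Rightarrow> rat fls \<Rightarrow> laurent2" where
  "tensor f g = (\<lambda>(i, j). fls_nth f i * fls_nth g j)"

(* coproduct: the ring map with Delta(t) = t (x) t, i.e. t^n |-> t1^n t2^n *)
definition coprod :: "rat fls \<Rightarrow> laurent2" where
  "coprod f = (\<lambda>(i, j). if i = j then fls_nth f i else 0)"

(* counit: t |-> 1 *)
definition counit :: "rat fls \<Rightarrow> rat" where
  "counit f = (\<Sum>n \<in> {n. fls_nth f n \<noteq> 0}. fls_nth f n)"

(* antipode: t |-> 1/t *)
definition antipode :: "rat fls \<Rightarrow> rat fls" where
  "antipode f = Abs_fls (\<lambda>n. fls_nth f (- n))"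

(* image of S (x)_Z S in Q[t,1/t] (x)_Q Q[t,1/t]: finite sums of elementary tensors *)
definition tensor_square :: "rat fls set \<Rightarrow> laurent2 set" where
  "tensor_square S = {x. \<exists>(I::nat set) a b. finite I \<and> (\<forall>i\<in>I. a i \<in> S \<and> b i \<in> S) \<and>
                         x = (\<lambda>ij. \<Sum>i\<in>I. tensor (a i) (b i) ij)}"

definition subring_of :: "'a::comm_ring_1 set \<Rightarrow> bool" where
  "subring_of S \<longleftrightarrow> 0 \<in> S \<and> 1 \<in> S \<and>
     (\<forall>x\<in>S. \<forall>y\<in>S. x + y \<in> S \<and> x * y \<in> S \<and> - x \<in> S)"

definition hopf_subalgebra :: "rat fls set \<Rightarrow> bool" where
  "hopf_subalgebra S \<longleftrightarrow> S \<subseteq> laurent_polys \<and> subring_of S \<and>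
     (\<forall>f\<in>S. coprod f \<in> tensor_square S) \<and>
     (\<forall>f\<in>S. counit f \<in> \<int>) \<and>
     (\<forall>f\<in>S. antipode f \<in> S)"

definition Q_algebra :: "'a::comm_ring_1 itself \<Rightarrow> bool" where
  "Q_algebra _ \<longleftrightarrow> (\<forall>n::nat. n > 0 \<longrightarrow> (\<exists>u::'a. of_nat n * u = 1))"

definition binom :: "'a::comm_ring_1 \<Rightarrow> nat \<Rightarrow> 'a" where
  "binom r n = (\<Prod>i<n. r - of_nat i) * (THE u. of_nat (fact n) * u = (1::'a))"

definition binomial_ring :: "'a::comm_ring_1 set \<Rightarrow> bool" where
  "binomial_ring R \<longleftrightarrow> subring_of R \<and> (\<forall>r\<in>R. \<forall>n. binom r n \<in> R)"

definition ring_hom_on :: "'a::comm_ring_1 set \<Rightarrow> 'b::comm_ring_1 set \<Rightarrow> ('a \<Rightarrow> 'b) \<Rightarrow> bool" where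
  "ring_hom_on A B \<phi> \<longleftrightarrow> (\<forall>x\<in>A. \<phi> x \<in> B) \<and> \<phi> 1 = 1 \<and>
     (\<forall>x\<in>A. \<forall>y\<in>A. \<phi> (x + y) = \<phi> x + \<phi> y \<and> \<phi> (x * y) = \<phi> x * \<phi> y)"

end

theory Submission imports Defs "HOL-Number_Theory.Cong" "HOL.Binomial_Plus" begin

unbundle fps_syntax



lemma mult_fact_bound:
  fixes q :: int assumes "prime q"
  shows "multiplicity q (fact n :: int) \<le> fact n"
proof -
  define v where "v = multiplicity q (fact n :: int)"
  have "q ^ v dvd fact n" unfolding v_def by (rule multiplicity_dvd)
  hence "q ^ v \<le> fact n" by (rule zdvd_imp_le) (simp add: fact_gt_zero)
  moreover have "int v < 2 ^ v" using less_exp[of v] by (metis of_nat_less_iff of_nat_numeral of_nat_power)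
  moreover have "(2::int) ^ v \<le> q ^ v" using prime_ge_2_int[OF assms] by (simp add: power_mono)
  ultimately have "int v < fact n" by linarith
  thus ?thesis unfolding v_def by (metis of_nat_fact of_nat_less_imp_less less_imp_le)
qed

lemma key_dvd:
  fixes a b :: int
  shows "fact n dvd b ^ fact n * (\<Prod>j<n. a + int j * b)"
proof (cases "b ^ fact n * (\<Prod>j<n. a + int j * b) = 0")
  case True then show ?thesis by (simp only: dvd_0_right)
next
  case nz: False
  define X where "X = b ^ fact n * (\<Prod>j<n. a + int j * b)"
  have Xnz: "X \<noteq> 0" using nz X_def by simp
  have bnz: "b \<noteq> 0" using nz by auto
  show ?thesis unfolding X_def[symmetric]
  proof (rule multiplicity_le_imp_dvd)
    show "(fact n::int) \<noteq> 0" by simp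
  next
    fix q :: int assume q: "prime q"
    show "multiplicity q (fact n) \<le> multiplicity q X"
    proof (cases "q dvd b")
      case True
      have "multiplicity q (b ^ fact n) \<le> multiplicity q X"
        using Xnz by (intro dvd_imp_multiplicity_le) (simp_all add: X_def)
      moreover have "multiplicity q (b ^ fact n) = fact n * multiplicity q b"
        using q bnz by (intro prime_elem_multiplicity_power_distrib) auto
      moreover have "multiplicity q b \<ge> 1"
        using True q bnz by (intro multiplicity_geI) auto
      ultimately show ?thesis using mult_fact_bound[OF q, of n]
        by (metis dual_order.trans mult.right_neutral mult_le_mono2)
    next
      case False
      define E where "E = multiplicity q (fact n :: int)"
      have cop: "coprime b (q ^ E)"
        using False q by (metis coprime_commute coprime_power_right_iff prime_imp_coprime)
      obtain u where u: "[b * u = 1] (mod q ^ E)"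
        using cong_solve_coprime_int[OF cop] by blast
      have "[(\<Prod>j<n. a + int j * b) = (\<Prod>j<n. b * (a * u + int j))] (mod q ^ E)"
      proof (rule cong_prod)
        fix j assume "j \<in> {..<n}"
        have "[a * (b * u) = a * 1] (mod q ^ E)" using u by (rule cong_scalar_left)
        hence "[a * (b * u) + int j * b = a * 1 + int j * b] (mod q ^ E)" by (rule cong_add_rcancel_0 [THEN iffD2, OF cong_refl] | (simp add: cong_add))
        thus "[a + int j * b = b * (a * u + int j)] (mod q ^ E)"
          by (simp add: algebra_simps cong_sym)
      qed
      moreover have "(\<Prod>j<n. b * (a * u + int j)) = b ^ n * pochhammer (a * u) n"
        by (simp add: prod.distrib pochhammer_prod atLeast0LessThan)
      moreover have "q ^ E dvd b ^ n * pochhammer (a * u) n"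
        using multiplicity_dvd[of q "fact n :: int"] fact_dvd_pochhammer[of n "a*u"]
        unfolding E_def by (meson dvd_mult dvd_trans)
      ultimately have "q ^ E dvd (\<Prod>j<n. a + int j * b)"
        by (metis cong_dvd_iff)
      hence "q ^ E dvd X" unfolding X_def by simp
      thus ?thesis unfolding E_def[symmetric] using q Xnz
        by (intro multiplicity_geI) auto
    qed
  qed
qed




definition dlt :: "rat poly \<Rightarrow> rat poly" where "dlt p = pcompose p [:1,1:] - p"
definition bpoly :: "nat \<Rightarrow> rat poly" where
  "bpoly i = smult (1 / fact i) (\<Prod>j<i. [:- of_nat j, 1:])"

lemma poly_dlt [simp]: "poly (dlt p) x = poly p (x + 1) - poly p x"
  by (simp add: dlt_def poly_pcompose add.commute)

lemma dlt_add: "dlt (p + q) = dlt p + dlt q"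
  by (simp add: dlt_def pcompose_add)
lemma dlt_diff: "dlt (p - q) = dlt p - dlt q"
  by (simp add: dlt_def pcompose_diff)
lemma dlt_smult: "dlt (smult c p) = smult c (dlt p)"
  by (simp add: dlt_def pcompose_smult smult_diff_right)
lemma dlt_0 [simp]: "dlt 0 = 0" by (simp add: dlt_def)
lemma dlt_sum: "dlt (\<Sum>i\<in>A. f i) = (\<Sum>i\<in>A. dlt (f i))"
  by (induct A rule: infinite_finite_induct) (auto simp: dlt_add)

lemma funpow_dlt_0 [simp]: "(dlt^^i) 0 = 0" by (induct i) auto
lemma funpow_dlt_add: "(dlt^^i) (p + q) = (dlt^^i) p + (dlt^^i) q"
  by (induct i) (auto simp: dlt_add)
lemma funpow_dlt_smult: "(dlt^^i) (smult c p) = smult c ((dlt^^i) p)"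
  by (induct i) (auto simp: dlt_smult)
lemma funpow_dlt_sum: "(dlt^^i) (\<Sum>j\<in>A. f j) = (\<Sum>j\<in>A. (dlt^^i) (f j))"
  by (induct A rule: infinite_finite_induct) (auto simp: funpow_dlt_add)

lemma degree_dlt: "degree (dlt p) \<le> degree p - 1"
proof (cases "degree p = 0")
  case True
  then obtain c where "p = [:c:]" by (metis degree_eq_zeroE)
  then show ?thesis by (simp add: dlt_def)
next
  case False
  define d where "d = degree p"
  have dc: "degree (pcompose p [:1,1:]) = d" by (simp add: degree_pcompose d_def)
  have lc: "coeff (pcompose p [:1,1:]) d = coeff p d"
    using lead_coeff_comp[of "[:1,1::rat:]" p] dc by (simp add: d_def)
  have "degree (dlt p) \<le> d" unfolding dlt_def using dc
    by (metis degree_diff_le d_def order.refl)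
  moreover have "coeff (dlt p) d = 0" by (simp add: dlt_def lc)
  ultimately have "degree (dlt p) < d \<or> dlt p = 0"
    by (metis le_neq_implies_less leading_coeff_0_iff)
  then show ?thesis using False d_def by auto
qed

lemma poly_bpoly: "poly (bpoly i) x = x gchoose i"
  by (simp add: bpoly_def gbinomial_prod_rev poly_prod atLeast0LessThan)

lemma bpoly_eqI: "(\<And>x. poly p x = poly q x) \<Longrightarrow> p = (q::rat poly)"
  using poly_eq_poly_eq_iff by blast

lemma dlt_bpoly_0: "dlt (bpoly 0) = 0"
  by (rule bpoly_eqI) (simp add: poly_bpoly)
lemma dlt_bpoly_Suc: "dlt (bpoly (Suc i)) = bpoly i"
  by (rule bpoly_eqI) (simp add: poly_bpoly gbinomial_Suc_Suc)
lemma poly_bpoly_0: "poly (bpoly i) 0 = (if i = 0 then 1 else 0)"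
  by (simp add: poly_bpoly gbinomial_0_left)

lemma const_dlt_zero:
  assumes "dlt h = 0" "poly h 0 = 0" shows "h = 0"
proof (rule ccontr)
  assume "h \<noteq> 0"
  hence fin: "finite {x. poly h x = 0}" by (rule poly_roots_finite)
  have "poly h (of_nat n) = 0" for n
  proof (induct n)
    case (Suc n)
    have "poly (dlt h) (of_nat n) = 0" using assms by simp
    then show ?case using Suc by (simp add: add.commute)
  qed (use assms in simp)
  hence "range (of_nat :: nat \<Rightarrow> rat) \<subseteq> {x. poly h x = 0}" by auto
  hence "finite (range (of_nat :: nat \<Rightarrow> rat))" using fin finite_subset by blast
  moreover have "inj (of_nat :: nat \<Rightarrow> rat)" by (simp add: inj_on_def)
  ultimately show False using finite_imageD by fastforce
qed

lemma newton:
  "degree f \<le> D \<Longrightarrow> f = (\<Sum>i\<le>D. smult (poly ((dlt^^i) f) 0) (bpoly i))"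
proof (induct D arbitrary: f)
  case 0
  then obtain c where "f = [:c:]" by (metis degree_eq_zeroE le_zero_eq)
  then show ?case by (simp add: bpoly_def)
next
  case (Suc D)
  define g where "g = dlt f"
  have "degree g \<le> D" using degree_dlt[of f] Suc.prems unfolding g_def by linarith
  hence IH: "g = (\<Sum>i\<le>D. smult (poly ((dlt^^i) g) 0) (bpoly i))" by (rule Suc.hyps)
  define h where "h = f - (\<Sum>i\<le>Suc D. smult (poly ((dlt^^i) f) 0) (bpoly i))"
  have "dlt h = g - (\<Sum>i\<le>Suc D. smult (poly ((dlt^^i) f) 0) (dlt (bpoly i)))"
    unfolding h_def dlt_diff dlt_sum dlt_smult g_def by (rule refl)
  also have "(\<Sum>i\<le>Suc D. smult (poly ((dlt^^i) f) 0) (dlt (bpoly i)))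
      = (\<Sum>i\<le>D. smult (poly ((dlt^^Suc i) f) 0) (dlt (bpoly (Suc i))))"
    by (subst sum.atMost_Suc_shift) (simp add: dlt_bpoly_0)
  also have "\<dots> = (\<Sum>i\<le>D. smult (poly ((dlt^^i) g) 0) (bpoly i))"
    by (simp add: dlt_bpoly_Suc g_def funpow_Suc_right del: funpow.simps)
  finally have "dlt h = 0" using IH by simp
  moreover have "poly h 0 = 0"
    by (simp add: h_def poly_sum poly_bpoly_0 sum.atMost_Suc_shift del: sum.atMost_Suc)
  ultimately have "h = 0" by (rule const_dlt_zero)
  then show ?case by (simp add: h_def)
qed




lemma gb_nat_int: "((of_nat n :: rat) gchoose i) \<in> \<int>"
  by (metis Ints_of_nat binomial_gbinomial)
lemma gb_int: "((of_int z :: rat) gchoose i) \<in> \<int>"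
proof (cases "z \<ge> 0")
  case True
  then have "(of_int z :: rat) = of_nat (nat z)" by simp
  then show ?thesis using gb_nat_int by metis
next
  case False
  have "(of_int z :: rat) gchoose i = (-1)^i * ((of_nat i - of_int z - 1) gchoose i)"
    by (rule gbinomial_negated_upper)
  moreover have "(of_nat i - of_int z - 1 :: rat) = of_nat (nat (int i - z - 1))"
    using False by (simp add: of_nat_nat)
  ultimately show ?thesis using gb_nat_int[of "nat (int i - z - 1)" i] 
    by (metis Ints_1 Ints_minus Ints_mult Ints_power)
qed

definition IV :: "rat poly set" where "IV = {p. \<forall>n::int. poly p (of_int n) \<in> \<int>}"

lemma IV_add: "p \<in> IV \<Longrightarrow> q \<in> IV \<Longrightarrow> p + q \<in> IV"
  unfolding IV_def mem_Collect_eq poly_add by (blast intro: Ints_add)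
lemma IV_diff: "p \<in> IV \<Longrightarrow> q \<in> IV \<Longrightarrow> p - q \<in> IV"
  unfolding IV_def mem_Collect_eq poly_diff by (blast intro: Ints_diff)
lemma IV_mult: "p \<in> IV \<Longrightarrow> q \<in> IV \<Longrightarrow> p * q \<in> IV"
  unfolding IV_def mem_Collect_eq poly_mult by (blast intro: Ints_mult)
lemma IV_uminus: "p \<in> IV \<Longrightarrow> - p \<in> IV"
  unfolding IV_def mem_Collect_eq poly_minus by (blast intro: Ints_minus)
lemma IV_0: "0 \<in> IV" unfolding IV_def by simp
lemma IV_1: "1 \<in> IV" unfolding IV_def by simp
lemma IV_X: "[:0,1:] \<in> IV" unfolding IV_def by simp
lemma IV_monom: "monom 1 k \<in> IV"
  unfolding IV_def mem_Collect_eq poly_monom by (metis Ints_of_int Ints_power mult_1)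
lemma IV_smult_int: "c \<in> \<int> \<Longrightarrow> p \<in> IV \<Longrightarrow> smult c p \<in> IV"
  unfolding IV_def mem_Collect_eq poly_smult by (blast intro: Ints_mult)
lemma IV_dlt: "p \<in> IV \<Longrightarrow> dlt p \<in> IV"
  unfolding IV_def mem_Collect_eq poly_dlt by (metis Ints_diff of_int_1 of_int_add)
lemma IV_funpow_dlt: "p \<in> IV \<Longrightarrow> (dlt^^i) p \<in> IV"
  by (induct i) (simp_all add: IV_dlt)
lemma IV_coeffs: "p \<in> IV \<Longrightarrow> poly ((dlt^^i) p) 0 \<in> \<int>"
  using IV_funpow_dlt[of p i] unfolding IV_def mem_Collect_eq by (metis of_int_0)
lemma IV_sum: "(\<And>i. i \<in> A \<Longrightarrow> f i \<in> IV) \<Longrightarrow> (\<Sum>i\<in>A. f i) \<in> IV"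
  by (induct A rule: infinite_finite_induct) (simp_all add: IV_0 IV_add)
lemma IV_prod: "(\<And>i. i \<in> A \<Longrightarrow> f i \<in> IV) \<Longrightarrow> (\<Prod>i\<in>A. f i) \<in> IV"
  by (induct A rule: infinite_finite_induct) (simp_all add: IV_1 IV_mult)
lemma IV_bpoly: "bpoly i \<in> IV"
  unfolding IV_def mem_Collect_eq poly_bpoly by (blast intro: gb_int)
lemma IV_pcompose: "p \<in> IV \<Longrightarrow> y \<in> \<int> \<Longrightarrow> pcompose p [:0, y:] \<in> IV"
  unfolding IV_def mem_Collect_eq poly_pcompose by (metis Ints_cases of_int_mult mult_zero_left add_0 poly_pCons poly_0 mult.commute add_0_right)

lemma numerical_subset: "p \<in> numerical_polys \<Longrightarrow> p \<in> IV"
proof -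
  assume "p \<in> numerical_polys"
  then obtain N :: int where N: "\<And>n::int. n \<ge> N \<Longrightarrow> poly p (of_int n) \<in> \<int>"
    unfolding numerical_polys_def by blast
  define q where "q = pcompose p [:of_int N, 1:]"
  have pq: "poly q x = poly p (of_int N + x)" for x by (simp add: q_def poly_pcompose)
  have "poly ((dlt^^i) q) (of_nat n) \<in> \<int>" for i n
  proof (induct i arbitrary: n)
    case 0
    have "poly p (of_int (N + int n)) \<in> \<int>" by (rule N) simp
    then show ?case by (simp add: pq)
  next
    case (Suc i)
    have "poly ((dlt^^i) q) (of_nat (Suc n)) - poly ((dlt^^i) q) (of_nat n) \<in> \<int>"
      by (intro Ints_diff Suc.hyps)
    then show ?case by (simp add: add.commute)
  qed
  hence ci: "poly ((dlt^^i) q) 0 \<in> \<int>" for i by (metis of_nat_0)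
  have qn: "q = (\<Sum>i\<le>degree q. smult (poly ((dlt^^i) q) 0) (bpoly i))"
    by (rule newton) simp
  show "p \<in> IV" unfolding IV_def
  proof safe
    fix m :: int
    have "poly p (of_int m) = poly q (of_int (m - N))" unfolding pq by simp
    also have "\<dots> = (\<Sum>i\<le>degree q. poly ((dlt^^i) q) 0 * (of_int (m - N) gchoose i))"
      by (rule trans[OF arg_cong[OF qn]]) (simp add: poly_sum poly_bpoly)
    also have "\<dots> \<in> \<int>"
      by (intro Ints_sum Ints_mult ci gb_int)
    finally show "poly p (of_int m) \<in> \<int>" .
  qed
qed

lemma numerical_eq: "numerical_polys = IV"
proof
  show "numerical_polys \<subseteq> IV" using numerical_subset by blast
  show "IV \<subseteq> numerical_polys" unfolding numerical_polys_def IV_def by blast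
qed




definition L :: "rat poly \<Rightarrow> nat \<Rightarrow> rat fls" where
  "L q k = poly_to_laurent q * fls_X_inv ^ k"

lemma L_shift_conv: "L q k = fls_shift (int k) (poly_to_laurent q)"
  unfolding L_def by (rule fls_X_inv_power_times_conv_shift(2))

lemma L_nth: "L q k $$ n = (if n + int k < 0 then 0 else coeff q (nat (n + int k)))"
  unfolding L_shift_conv poly_to_laurent_def by simp

lemma L_eqI: "(\<And>n. L q k $$ n = L q' k' $$ n) \<Longrightarrow> L q k = L q' k'"
  by (rule fls_eqI)

lemma L_pad: "L (q * monom 1 j) (k + j) = L q k"
proof (rule fls_eqI)
  fix n
  show "L (q * monom 1 j) (k + j) $$ n = L q k $$ n"
  proof (cases "n + int k < 0")
    case True
    show ?thesis
    proof (cases "n + int (k + j) < 0")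
      case False
      hence "nat (n + int (k + j)) < j" using True by linarith
      thus ?thesis using True False unfolding L_nth by (simp add: mult.commute[of q] coeff_monom_mult)
    qed (use True in \<open>simp add: L_nth\<close>)
  next
    case False
    hence "\<not> nat (n + int (k + j)) < j" "nat (n + int (k + j)) - j = nat (n + int k)" by linarith+
    thus ?thesis using False unfolding L_nth by (simp add: mult.commute[of q] coeff_monom_mult)
  qed
qed

lemma L_inj: "L q k = L q' k \<Longrightarrow> q = q'"
proof (rule poly_eqI)
  fix m assume "L q k = L q' k"
  hence "L q k $$ (int m - int k) = L q' k $$ (int m - int k)" by simp
  thus "coeff q m = coeff q' m" unfolding L_nth by simp
qed

lemma L_eq_iff: "L q k = L q' k' \<longleftrightarrow> q * monom 1 k' = q' * monom 1 k"
proof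
  assume "L q k = L q' k'"
  hence "L (q * monom 1 k') (k + k') = L (q' * monom 1 k) (k + k')"
    by (metis L_pad add.commute)
  thus "q * monom 1 k' = q' * monom 1 k" by (rule L_inj)
next
  assume "q * monom 1 k' = q' * monom 1 k"
  thus "L q k = L q' k'" by (metis L_pad add.commute)
qed

lemma ptl_mult: "poly_to_laurent (p * q) = poly_to_laurent p * poly_to_laurent q"
  unfolding poly_to_laurent_def by (simp add: fps_of_poly_mult fls_times_fps_to_fls)
lemma ptl_add: "poly_to_laurent (p + q) = poly_to_laurent p + poly_to_laurent q"
  unfolding poly_to_laurent_def by (simp add: fps_of_poly_add)
lemma ptl_uminus: "poly_to_laurent (- p) = - poly_to_laurent p"
  unfolding poly_to_laurent_def by (simp add: fps_of_poly_uminus)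
lemma ptl_1: "poly_to_laurent 1 = 1"
  unfolding poly_to_laurent_def by simp
lemma ptl_0: "poly_to_laurent 0 = 0"
  unfolding poly_to_laurent_def by simp

lemma L_mult: "L q k * L q' k' = L (q * q') (k + k')"
  unfolding L_def ptl_mult power_add by (simp add: algebra_simps)
lemma L_add_same: "L q k + L q' k = L (q + q') k"
  unfolding L_def ptl_add by (simp add: algebra_simps)
lemma L_add: "L q k + L q' k' = L (q * monom 1 k' + q' * monom 1 k) (k + k')"
  by (metis L_add_same L_pad add.commute)
lemma L_uminus: "- L q k = L (- q) k"
  unfolding L_def ptl_uminus by simp
lemma L_one: "1 = L 1 0" unfolding L_def ptl_1 by simp
lemma L_zero: "0 = L 0 0" unfolding L_def ptl_0 by simp
lemma L_X: "fls_X = L [:0,1:] 0"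
  unfolding L_def poly_to_laurent_def by simp
lemma L_Xinv: "fls_X_inv = L 1 1"
  unfolding L_def ptl_1 by simp
lemma L_const: "fls_const c = L [:c:] 0"
  unfolding L_def poly_to_laurent_def by (simp add: fps_of_poly_const)
lemma L_const_mult: "fls_const c * L q k = L (smult c q) k"
  unfolding L_const L_mult by simp
lemma L_sum: "finite A \<Longrightarrow> (\<Sum>i\<in>A. L (f i) k) = L (\<Sum>i\<in>A. f i) k"
proof (induct A rule: finite_induct)
  case empty
  have "L 0 k = 0" unfolding L_def ptl_0 by simp
  thus ?case by simp
next
  case (insert x F)
  thus ?case by (simp add: L_add_same)
qed

lemma H_ring_eq: "H_ring = {L q k | q k. q \<in> IV}"
  unfolding H_ring_def L_def numerical_eq by blast




lemma L_support: "{n. L q k $$ n \<noteq> 0} \<subseteq> (\<lambda>m. int m - int k) ` {..degree q}"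
proof
  fix n assume "n \<in> {n. L q k $$ n \<noteq> 0}"
  hence h: "\<not> n + int k < 0" "coeff q (nat (n + int k)) \<noteq> 0" unfolding L_nth
    by (auto split: if_splits)
  hence "nat (n + int k) \<le> degree q" by (simp add: le_degree)
  moreover have "n = int (nat (n + int k)) - int k" using h by simp
  ultimately show "n \<in> (\<lambda>m. int m - int k) ` {..degree q}" by blast
qed

lemma L_laurent: "L q k \<in> laurent_polys"
  unfolding laurent_polys_def using L_support finite_subset by blast

lemma H_sub: "H_ring \<subseteq> laurent_polys"
  unfolding H_ring_eq using L_laurent by blast

lemma H_subring: "subring_of H_ring"
  unfolding subring_of_def H_ring_eq
proof (intro conjI ballI)
  show "(0::rat fls) \<in> {L q k |q k. q \<in> IV}" using L_zero IV_0 by blast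
  show "(1::rat fls) \<in> {L q k |q k. q \<in> IV}" using L_one IV_1 by blast
  fix x y assume x: "x \<in> {L q k |q k. q \<in> IV}" and y: "y \<in> {L q k |q k. q \<in> IV}"
  from x obtain q k where xq: "x = L q k" "q \<in> IV" by blast
  from y obtain q' k' where yq: "y = L q' k'" "q' \<in> IV" by blast
  show "x + y \<in> {L q k |q k. q \<in> IV}" unfolding xq yq L_add
    using xq yq by (blast intro: IV_add IV_mult IV_monom)
  show "x * y \<in> {L q k |q k. q \<in> IV}" unfolding xq yq L_mult
    using xq yq by (blast intro: IV_mult)
  show "- x \<in> {L q k |q k. q \<in> IV}" unfolding xq L_uminus
    using xq by (blast intro: IV_uminus)
qed

lemma counit_L: "counit (L q k) = poly q 1"
proof -
  define T where "T = (\<lambda>m. int m - int k) ` {..degree q}"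
  have "counit (L q k) = (\<Sum>n\<in>T. L q k $$ n)"
    unfolding counit_def T_def
    by (rule sum.mono_neutral_left) (use L_support in auto)
  also have "\<dots> = (\<Sum>m\<le>degree q. L q k $$ (int m - int k))"
    unfolding T_def by (subst sum.reindex) (auto simp: inj_on_def)
  also have "\<dots> = (\<Sum>m\<le>degree q. coeff q m)"
    by (rule sum.cong) (simp_all add: L_nth)
  also have "\<dots> = poly q 1" by (simp add: poly_altdef)
  finally show ?thesis .
qed

lemma counit_H: "f \<in> H_ring \<Longrightarrow> counit f \<in> \<int>"
  unfolding H_ring_eq using counit_L IV_def by (smt (verit) mem_Collect_eq of_int_1)

lemma int_div_Ints: "(d::int) dvd z \<Longrightarrow> (of_int z / of_int d :: rat) \<in> \<int>"
proof (cases "d = 0")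
  case False
  assume "d dvd z" then obtain e where "z = d * e" by blast
  hence "(of_int z / of_int d :: rat) = of_int e" using False by simp
  thus ?thesis by simp
qed simp




lemma recip_gb:
  fixes x :: int
  assumes x: "x \<noteq> 0" and E: "i + fact i \<le> E"
  shows "(of_int x :: rat) ^ E * ((1 / of_int x) gchoose i) \<in> \<int>"
proof -
  define X where "X = (of_int x :: rat)"
  have X0: "X \<noteq> 0" using x X_def by simp
  define P where "P = (\<Prod>j<i. 1 + int j * (- x))"
  define fi where "fi = (fact i :: nat)"
  have "(1 / X) gchoose i = (\<Prod>j<i. (1 / X - of_nat j)) / fact i"
    by (simp add: gbinomial_prod_rev atLeast0LessThan)
  also have "(\<Prod>j<i. (1 / X - of_nat j)) = (\<Prod>j<i. of_int (1 + int j * (- x)) / X)"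
  proof (rule prod.cong)
    fix j assume "j \<in> {..<i}"
    show "1 / X - of_nat j = of_int (1 + int j * (- x)) / X"
      using X0 unfolding X_def by (simp add: field_simps)
  qed simp
  also have "\<dots> = of_int P / X ^ i"
    by (simp add: prod_dividef P_def of_int_prod)
  finally have g: "(1 / X) gchoose i = of_int P / X ^ i / fact i" .
  have "X ^ E = X ^ (E - i - fi) * X ^ fi * X ^ i"
    using E by (simp add: fi_def flip: power_add)
  moreover have "X ^ fi = of_int ((-1) ^ fi) * of_int ((- x) ^ fi)"
    by (simp add: X_def flip: power_mult_distrib)
  ultimately have "X ^ E * ((1 / X) gchoose i) =
      of_int (x ^ (E - i - fi) * (-1) ^ fi) * (of_int ((- x) ^ fi * P) / of_int (fact i))"
    unfolding g using X0 by (simp add: X_def field_simps)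
  moreover have "of_int (x ^ (E - i - fi) * (-1) ^ fi) \<in> (\<int> :: rat set)" by simp
  moreover have "of_int ((- x) ^ fi * P) / of_int (fact i) \<in> (\<int> :: rat set)"
    by (rule int_div_Ints) (unfold P_def fi_def, rule key_dvd)
  ultimately show ?thesis unfolding X_def by (metis Ints_mult)
qed


lemma antipode_nth: "f \<in> laurent_polys \<Longrightarrow> antipode f $$ n = f $$ (- n)"
proof -
  assume "f \<in> laurent_polys"
  hence fin: "finite {n. f $$ n \<noteq> 0}" unfolding laurent_polys_def by simp
  have "finite {m::nat. f $$ (- (- int m)) \<noteq> 0}"
    using finite_vimageI[OF fin, of int] by (simp add: vimage_def)
  hence "Abs_fls (\<lambda>n. f $$ (- n)) $$ n = f $$ (- n)"
    by (intro nth_Abs_fls_finite_nonzero_neg_nth) simp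
  thus ?thesis unfolding antipode_def .
qed

definition rv :: "rat poly \<Rightarrow> nat \<Rightarrow> rat poly" where
  "rv q E = (\<Sum>l\<le>degree q. smult (coeff q l) (monom 1 (E - l)))"

lemma coeff_rv:
  assumes "degree q \<le> E"
  shows "coeff (rv q E) j = (if j \<le> E then coeff q (E - j) else 0)"
proof -
  have "coeff (rv q E) j = (\<Sum>l\<le>degree q. coeff q l * (if E - l = j then 1 else 0))"
    unfolding rv_def coeff_sum by (simp add: coeff_monom)
  also have "\<dots> = (\<Sum>l\<le>degree q. if l = E - j \<and> j \<le> E then coeff q l else 0)"
  proof (rule sum.cong)
    fix l assume "l \<in> {..degree q}"
    hence "(E - l = j) = (l = E - j \<and> j \<le> E)" using assms by auto
    thus "coeff q l * (if E - l = j then 1 else 0) = (if l = E - j \<and> j \<le> E then coeff q l else 0)"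
      by simp
  qed simp
  also have "\<dots> = (if j \<le> E then coeff q (E - j) else 0)"
  proof (cases "j \<le> E")
    case True
    have "(\<Sum>l\<le>degree q. if l = E - j \<and> j \<le> E then coeff q l else 0)
        = (\<Sum>l\<le>degree q. if l = E - j then coeff q l else 0)"
      using True by simp
    also have "\<dots> = (if E - j \<in> {..degree q} then coeff q (E - j) else 0)"
      by (rule sum.delta) simp
    also have "\<dots> = coeff q (E - j)" by (auto simp: coeff_eq_0)
    finally show ?thesis using True by simp
  qed simp
  finally show ?thesis .
qed

lemma poly_rv:
  assumes "degree q \<le> E" "X \<noteq> 0"
  shows "poly (rv q E) X = X ^ E * poly q (1 / X)"
proof -
  have "poly (rv q E) X = (\<Sum>l\<le>degree q. coeff q l * X ^ (E - l))"
    unfolding rv_def by (simp add: poly_sum poly_monom)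
  also have "\<dots> = (\<Sum>l\<le>degree q. X ^ E * (coeff q l * (1 / X) ^ l))"
  proof (rule sum.cong)
    fix l assume "l \<in> {..degree q}"
    hence "l \<le> E" using assms by simp
    thus "coeff q l * X ^ (E - l) = X ^ E * (coeff q l * (1 / X) ^ l)"
    proof -
      have e: "X ^ E = X ^ (E - l) * X ^ l" using \<open>l \<le> E\<close> by (simp flip: power_add)
      have "X ^ l * (1 / X) ^ l = 1" using assms(2) by (simp add: power_one_over)
      thus ?thesis unfolding e by (metis (no_types, lifting) mult.assoc mult.commute mult.right_neutral)
    qed
  qed simp
  also have "\<dots> = X ^ E * poly q (1 / X)"
    by (simp add: poly_altdef sum_distrib_left)
  finally show ?thesis .
qed

lemma rv_IV:
  assumes q: "q \<in> IV" and E: "degree q + fact (degree q) \<le> E"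
  shows "rv q E \<in> IV"
  unfolding IV_def mem_Collect_eq
proof
  fix x :: int
  define D where "D = degree q"
  have DE: "degree q \<le> E" using E by simp
  show "poly (rv q E) (of_int x) \<in> \<int>"
  proof (cases "x = 0")
    case True
    have "fact (degree q) \<ge> (1::nat)" by simp
    hence "D < E" using E unfolding D_def by linarith
    have "poly (rv q E) (of_int x) = coeff (rv q E) 0" using True by (simp add: poly_0_coeff_0)
    also have "\<dots> = coeff q E" using DE by (simp add: coeff_rv)
    also have "\<dots> = 0" using \<open>D < E\<close> D_def by (simp add: coeff_eq_0)
    finally show ?thesis by simp
  next
    case False
    define X where "X = (of_int x :: rat)"
    have X0: "X \<noteq> 0" using False X_def by simp
    have qn: "q = (\<Sum>i\<le>D. smult (poly ((dlt^^i) q) 0) (bpoly i))"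
      unfolding D_def by (rule newton) simp
    have "poly (rv q E) X = X ^ E * poly q (1 / X)" using DE X0 by (rule poly_rv)
    also have "poly q (1 / X) = (\<Sum>i\<le>D. poly ((dlt^^i) q) 0 * ((1 / X) gchoose i))"
      by (subst qn) (simp add: poly_sum poly_bpoly)
    also have "X ^ E * \<dots> = (\<Sum>i\<le>D. poly ((dlt^^i) q) 0 * (X ^ E * ((1 / X) gchoose i)))"
      by (simp add: sum_distrib_left mult.left_commute)
    also have "\<dots> \<in> \<int>"
    proof (rule Ints_sum, rule Ints_mult[OF IV_coeffs[OF q]])
      fix i assume "i \<in> {..D}"
      hence "fact i \<le> (fact D :: nat)" by (simp add: fact_mono)
      hence "i + fact i \<le> E" using E \<open>i \<in> {..D}\<close> D_def by auto
      thus "X ^ E * ((1 / X) gchoose i) \<in> \<int>" unfolding X_def by (rule recip_gb[OF False])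
    qed
    finally show ?thesis unfolding X_def .
  qed
qed

lemma antipode_L:
  fixes q :: "rat poly"
  defines "M \<equiv> degree q + fact (degree q)"
  shows "antipode (L q k) = L (rv q (k + M)) M"
proof (rule fls_eqI)
  fix n
  have DE: "degree q \<le> k + M" unfolding M_def by simp
  have a: "antipode (L q k) $$ n = L q k $$ (- n)" by (rule antipode_nth[OF L_laurent])
  have l1: "L q k $$ (- n) = (if - n + int k < 0 then 0 else coeff q (nat (- n + int k)))"
    by (rule L_nth)
  have l2: "L (rv q (k + M)) M $$ n = (if n + int M < 0 then 0 else coeff (rv q (k + M)) (nat (n + int M)))"
    by (rule L_nth)
  show "antipode (L q k) $$ n = L (rv q (k + M)) M $$ n"
  proof (cases "n + int M < 0")
    case True
    hence lt: "degree q < nat (- n + int k)" "\<not> - n + int k < 0" unfolding M_def by linarith+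
    have "coeff q (nat (- n + int k)) = 0" using lt(1) by (rule coeff_eq_0)
    thus ?thesis unfolding a l1 l2 by (simp only: True lt(2) if_True if_False)
  next
    case False
    note c = coeff_rv[OF DE, of "nat (n + int M)"]
    show ?thesis
    proof (cases "n \<le> int k")
      case True
      have h: "nat (n + int M) \<le> k + M" "k + M - nat (n + int M) = nat (- n + int k)"
        "\<not> - n + int k < 0"
        using True False by linarith+
      show ?thesis unfolding a l1 l2 c by (simp only: h False if_True if_False)
    next
      case nk: False
      have h: "\<not> nat (n + int M) \<le> k + M" "- n + int k < 0" using nk False by linarith+
      show ?thesis unfolding a l1 l2 c by (simp only: h False if_True if_False)
    qed
  qed
qed

lemma antipode_H: "f \<in> H_ring \<Longrightarrow> antipode f \<in> H_ring"
proof -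
  assume "f \<in> H_ring"
  then obtain q k where f: "f = L q k" "q \<in> IV" unfolding H_ring_eq by blast
  define M where "M = degree q + fact (degree q)"
  have "antipode f = L (rv q (k + M)) M" unfolding f M_def by (rule antipode_L)
  moreover have "rv q (k + M) \<in> IV" using f(2) by (rule rv_IV) (simp add: M_def)
  ultimately show ?thesis unfolding H_ring_eq by blast
qed




lemma the_inv_fls: "(THE u::rat fls. of_nat (fact n) * u = 1) = fls_const (1 / fact n)"
proof (rule the_equality)
  show "of_nat (fact n) * fls_const (1 / fact n) = (1 :: rat fls)"
    unfolding fls_of_nat fls_const_mult_const by simp
next
  fix u :: "rat fls" assume u: "of_nat (fact n) * u = 1"
  have c: "fls_const (1 / fact n) * of_nat (fact n) = (1 :: rat fls)"
    unfolding fls_of_nat fls_const_mult_const by simp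
  have "u = (fls_const (1 / fact n) * of_nat (fact n)) * u" unfolding c by simp
  also have "\<dots> = fls_const (1 / fact n)" by (simp only: mult.assoc u mult_1_right)
  finally show "u = fls_const (1 / fact n)" .
qed

lemma prod_L: "(\<Prod>i<n. L (g i) k) = L (\<Prod>i<n. g i) (n * k)"
proof (induct n)
  case 0 show ?case by (simp add: L_one)
next
  case (Suc n)
  have "(\<Prod>i<Suc n. L (g i) k) = (\<Prod>i<n. L (g i) k) * L (g n) k" by simp
  also have "\<dots> = L ((\<Prod>i<n. g i) * g n) (n * k + k)" unfolding Suc L_mult ..
  also have "\<dots> = L (\<Prod>i<Suc n. g i) (Suc n * k)" by (simp add: add.commute)
  finally show ?case .
qed

lemma of_nat_L: "(of_nat i :: rat fls) = L ([:of_nat i:] * monom 1 k) k"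
proof -
  have "(of_nat i :: rat fls) = L [:of_nat i:] 0" unfolding fls_of_nat L_const ..
  also have "\<dots> = L ([:of_nat i:] * monom 1 k) (0 + k)" by (rule L_pad[symmetric])
  finally show ?thesis by simp
qed

lemma binom_L:
  "binom (L q k) n = L (smult (1 / fact n) (\<Prod>i<n. q - [:of_nat i:] * monom 1 k) * monom 1 (k * fact n))
      (n * k + k * fact n)"
proof -
  have "(\<Prod>i<n. L q k - of_nat i) = (\<Prod>i<n. L (q - [:of_nat i:] * monom 1 k) k)"
  proof (rule prod.cong)
    fix i
    show "L q k - of_nat i = L (q - [:of_nat i:] * monom 1 k) k"
      unfolding of_nat_L[of i k] diff_conv_add_uminus L_uminus L_add_same ..
  qed simp
  also have "\<dots> = L (\<Prod>i<n. q - [:of_nat i:] * monom 1 k) (n * k)" by (rule prod_L)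
  finally have p: "(\<Prod>i<n. L q k - of_nat i) = L (\<Prod>i<n. q - [:of_nat i:] * monom 1 k) (n * k)" .
  have "binom (L q k) n = L (\<Prod>i<n. q - [:of_nat i:] * monom 1 k) (n * k) * fls_const (1 / fact n)"
    unfolding binom_def p the_inv_fls ..
  also have "\<dots> = L (smult (1 / fact n) (\<Prod>i<n. q - [:of_nat i:] * monom 1 k)) (n * k)"
    by (simp only: mult.commute[of _ "fls_const _"] L_const_mult)
  also have "\<dots> = L (smult (1 / fact n) (\<Prod>i<n. q - [:of_nat i:] * monom 1 k) * monom 1 (k * fact n))
      (n * k + k * fact n)" by (rule L_pad[symmetric])
  finally show ?thesis .
qed

lemma binom_val:
  fixes a x :: int
  shows "1 / fact n * (\<Prod>i<n. (of_int a :: rat) - of_nat i * of_int x ^ k) * of_int x ^ (k * fact n) \<in> \<int>"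
proof -
  define b where "b = - (x ^ k)"
  define fi where "fi = (fact n :: nat)"
  have p: "(\<Prod>i<n. (of_int a :: rat) - of_nat i * of_int x ^ k) = of_int (\<Prod>i<n. a + int i * b)"
    unfolding b_def by (simp add: of_int_prod)
  have xp: "(of_int x :: rat) ^ (k * fact n) = of_int ((-1) ^ fi) * of_int (b ^ fi)"
    unfolding b_def fi_def by (simp add: power_mult flip: power_mult_distrib)
  have "1 / fact n * (\<Prod>i<n. (of_int a :: rat) - of_nat i * of_int x ^ k) * of_int x ^ (k * fact n)
      = of_int ((-1) ^ fi) * (of_int (b ^ fi * (\<Prod>i<n. a + int i * b)) / of_int (fact n))"
    unfolding p xp by simp
  moreover have "of_int (b ^ fi * (\<Prod>i<n. a + int i * b)) / of_int (fact n) \<in> (\<int> :: rat set)"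
    by (rule int_div_Ints) (unfold fi_def, rule key_dvd)
  moreover have "of_int ((-1) ^ fi) \<in> (\<int> :: rat set)" by simp
  ultimately show ?thesis by (metis Ints_mult)
qed

lemma binom_IV:
  assumes q: "q \<in> IV"
  shows "smult (1 / fact n) (\<Prod>i<n. q - [:of_nat i:] * monom 1 k) * monom 1 (k * fact n) \<in> IV"
  unfolding IV_def mem_Collect_eq
proof
  fix x :: int
  obtain a where a: "poly q (of_int x) = of_int a" using q unfolding IV_def by (blast elim: Ints_cases)
  have "poly (smult (1 / fact n) (\<Prod>i<n. q - [:of_nat i:] * monom 1 k) * monom 1 (k * fact n)) (of_int x)
     = 1 / fact n * (\<Prod>i<n. (of_int a :: rat) - of_nat i * of_int x ^ k) * of_int x ^ (k * fact n)"
    by (simp add: poly_prod poly_monom a)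
  also have "\<dots> \<in> \<int>" by (rule binom_val)
  finally show "poly (smult (1 / fact n) (\<Prod>i<n. q - [:of_nat i:] * monom 1 k) * monom 1 (k * fact n)) (of_int x) \<in> \<int>" .
qed

lemma binomial_H: "binomial_ring H_ring"
  unfolding binomial_ring_def
proof (intro conjI ballI allI)
  show "subring_of H_ring" by (rule H_subring)
  fix r n assume "r \<in> H_ring"
  then obtain q k where r: "r = L q k" "q \<in> IV" unfolding H_ring_eq by blast
  have "binom r n = L (smult (1 / fact n) (\<Prod>i<n. q - [:of_nat i:] * monom 1 k) * monom 1 (k * fact n))
      (n * k + k * fact n)" unfolding r by (rule binom_L)
  moreover have "smult (1 / fact n) (\<Prod>i<n. q - [:of_nat i:] * monom 1 k) * monom 1 (k * fact n) \<in> IV"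
    using r(2) by (rule binom_IV)
  ultimately show "binom r n \<in> H_ring" unfolding H_ring_eq by blast
qed




definition ee :: "nat \<Rightarrow> nat \<Rightarrow> rat" where "ee i b = poly ((dlt^^i) (monom 1 b)) 0"
definition G :: "rat poly \<Rightarrow> nat \<Rightarrow> rat poly" where
  "G p i = (\<Sum>b\<le>degree p. smult (coeff p b * ee i b) (monom 1 b))"

lemma coeff_monom_newton:
  assumes "b \<le> D"
  shows "coeff (monom 1 b) u = (\<Sum>i\<le>D. ee i b * coeff (bpoly i) u)"
proof -
  have "degree (monom (1::rat) b) \<le> D" using assms by (simp add: degree_monom_eq)
  hence "monom 1 b = (\<Sum>i\<le>D. smult (ee i b) (bpoly i))" unfolding ee_def by (rule newton)
  hence "coeff (monom 1 b) u = coeff (\<Sum>i\<le>D. smult (ee i b) (bpoly i)) u" by (rule arg_cong)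
  thus ?thesis by (simp add: coeff_sum)
qed

lemma coeff_G: "coeff (G p i) v = (if v \<le> degree p then coeff p v * ee i v else 0)"
proof -
  have "coeff (G p i) v = (\<Sum>b\<le>degree p. if b = v then coeff p b * ee i b else 0)"
    unfolding G_def coeff_sum by (rule sum.cong) (simp_all add: coeff_monom)
  also have "\<dots> = (if v \<in> {..degree p} then coeff p v * ee i v else 0)"
    by (rule sum.delta) simp
  finally show ?thesis by simp
qed

lemma pcompose_expand:
  fixes p :: "rat poly"
  shows "pcompose p [:0, y:] = (\<Sum>b\<le>degree p. smult (coeff p b * y ^ b) (monom 1 b))"
proof (rule bpoly_eqI)
  fix z
  have "poly (pcompose p [:0, y:]) z = (\<Sum>b\<le>degree p. coeff p b * (y * z) ^ b)"
  proof -
    have "poly [:0, y:] z = y * z" by simp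
    thus ?thesis unfolding poly_pcompose poly_altdef[of p] by (simp add: mult.commute)
  qed
  also have "\<dots> = poly (\<Sum>b\<le>degree p. smult (coeff p b * y ^ b) (monom 1 b)) z"
    by (simp add: poly_sum poly_monom power_mult_distrib mult.assoc)
  finally show "poly (pcompose p [:0, y:]) z = poly (\<Sum>b\<le>degree p. smult (coeff p b * y ^ b) (monom 1 b)) z" .
qed

lemma G_IV:
  assumes p: "p \<in> IV" shows "G p i \<in> IV"
  unfolding IV_def mem_Collect_eq
proof
  fix y :: int
  define Y where "Y = (of_int y :: rat)"
  have "poly (G p i) Y = (\<Sum>b\<le>degree p. coeff p b * ee i b * Y ^ b)"
    unfolding G_def by (simp add: poly_sum poly_monom)
  also have "\<dots> = poly ((dlt^^i) (pcompose p [:0, Y:])) 0"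
    unfolding pcompose_expand funpow_dlt_sum funpow_dlt_smult
    by (simp add: poly_sum ee_def mult_ac)
  also have "\<dots> \<in> \<int>"
    by (rule IV_coeffs, rule IV_pcompose[OF p]) (simp add: Y_def)
  finally show "poly (G p i) (of_int y) \<in> \<int>" unfolding Y_def .
qed

lemma coprod_L:
  "coprod (L p k) = (\<lambda>ij. \<Sum>i\<in>{..degree p}. tensor (L (bpoly i) k) (L (G p i) k) ij)"
proof (rule ext, clarify)
  fix u v :: int
  define D where "D = degree p"
  have R: "(\<Sum>i\<in>{..degree p}. tensor (L (bpoly i) k) (L (G p i) k) (u, v))
      = (\<Sum>i\<le>D. L (bpoly i) k $$ u * L (G p i) k $$ v)"
    unfolding tensor_def D_def by simp
  have Lc: "coprod (L p k) (u, v) = (if u = v then L p k $$ u else 0)"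
    unfolding coprod_def by simp
  show "coprod (L p k) (u, v) = (\<Sum>i\<in>{..degree p}. tensor (L (bpoly i) k) (L (G p i) k) (u, v))"
    unfolding R Lc
  proof (cases "u + int k < 0 \<or> v + int k < 0")
    case True
    have z0: "L (bpoly i) k $$ u * L (G p i) k $$ v = 0" for i
      using True unfolding L_nth by auto
    have z1: "(if u = v then L p k $$ u else 0) = 0"
      using True unfolding L_nth by auto
    show "(if u = v then L p k $$ u else 0) = (\<Sum>i\<le>D. L (bpoly i) k $$ u * L (G p i) k $$ v)"
      unfolding z0 z1 by simp
  next
    case False
    define u' where "u' = nat (u + int k)"
    define v' where "v' = nat (v + int k)"
    have uv: "(u = v) = (u' = v')" using False unfolding u'_def v'_def by linarith
    have t: "L (bpoly i) k $$ u * L (G p i) k $$ v = coeff (bpoly i) u' * coeff (G p i) v'" for i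
      using False unfolding L_nth u'_def v'_def by simp
    have lhs: "(if u = v then L p k $$ u else 0) = (if u' = v' then coeff p u' else 0)"
      using False unfolding uv L_nth u'_def by simp
    show "(if u = v then L p k $$ u else 0) = (\<Sum>i\<le>D. L (bpoly i) k $$ u * L (G p i) k $$ v)"
      unfolding lhs t coeff_G
    proof (cases "v' \<le> degree p")
      case True
      have "(\<Sum>i\<le>D. coeff (bpoly i) u' * (if v' \<le> degree p then coeff p v' * ee i v' else 0))
          = coeff p v' * (\<Sum>i\<le>D. ee i v' * coeff (bpoly i) u')"
        using True by (simp add: sum_distrib_left mult_ac)
      also have "(\<Sum>i\<le>D. ee i v' * coeff (bpoly i) u') = coeff (monom 1 v') u'"
        using True D_def by (simp only: coeff_monom_newton)
      finally show "(if u' = v' then coeff p u' else 0) =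
          (\<Sum>i\<le>D. coeff (bpoly i) u' * (if v' \<le> degree p then coeff p v' * ee i v' else 0))"
        by (simp add: coeff_monom)
    next
      case False
      hence "(if u' = v' then coeff p u' else 0) = 0" by (simp add: coeff_eq_0)
      thus "(if u' = v' then coeff p u' else 0) =
          (\<Sum>i\<le>D. coeff (bpoly i) u' * (if v' \<le> degree p then coeff p v' * ee i v' else 0))"
        using False by simp
    qed
  qed
qed

lemma coprod_H: "f \<in> H_ring \<Longrightarrow> coprod f \<in> tensor_square H_ring"
proof -
  assume "f \<in> H_ring"
  then obtain p k where f: "f = L p k" "p \<in> IV" unfolding H_ring_eq by blast
  have a: "\<forall>i\<in>{..degree p}. L (bpoly i) k \<in> H_ring \<and> L (G p i) k \<in> H_ring"
    unfolding H_ring_eq using IV_bpoly G_IV[OF f(2)] by blast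
  show ?thesis unfolding tensor_square_def mem_Collect_eq f(1) coprod_L
    using a by (intro exI[of _ "{..degree p}"] exI[of _ "\<lambda>i. L (bpoly i) k"] exI[of _ "\<lambda>i. L (G p i) k"]) simp
qed




definition inv_n :: "nat \<Rightarrow> 'a::comm_ring_1" where
  "inv_n n = (THE u. of_nat n * u = 1)"

lemma inv_n_unique:
  fixes u :: "'a::comm_ring_1"
  assumes "of_nat n * u = 1" shows "inv_n n = u"
  unfolding inv_n_def
proof (rule the_equality)
  show "of_nat n * u = 1" by (rule assms)
  fix v :: 'a assume v: "of_nat n * v = 1"
  have "v = (u * of_nat n) * v" using assms by (simp add: mult.commute)
  also have "\<dots> = u" by (simp only: mult.assoc v mult_1_right)
  finally show "v = u" .
qed

lemma inv_n:
  assumes Q: "Q_algebra TYPE('a::comm_ring_1)" and n: "n > 0"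
  shows "of_nat n * (inv_n n :: 'a) = 1"
proof -
  obtain u :: 'a where "of_nat n * u = 1" using Q n unfolding Q_algebra_def by blast
  thus ?thesis using inv_n_unique by metis
qed

lemma inv_n_mult:
  assumes Q: "Q_algebra TYPE('a::comm_ring_1)" and "m > 0" "n > 0"
  shows "(inv_n (m * n) :: 'a) = inv_n m * inv_n n"
proof (rule inv_n_unique)
  have "of_nat (m * n) * (inv_n m * inv_n n :: 'a) = (of_nat m * inv_n m) * (of_nat n * inv_n n)"
    by (simp add: mult_ac)
  also have "\<dots> = 1" using inv_n[OF Q] assms by simp
  finally show "of_nat (m * n) * (inv_n m * inv_n n :: 'a) = 1" .
qed

definition ratmap :: "rat \<Rightarrow> 'a::comm_ring_1" where
  "ratmap x = of_int (fst (quotient_of x)) * inv_n (nat (snd (quotient_of x)))"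

lemma ratmap_frac:
  assumes Q: "Q_algebra TYPE('a::comm_ring_1)" and b: "b > 0"
  shows "(ratmap (of_int a / of_int b) :: 'a) = of_int a * inv_n (nat b)"
proof -
  obtain a' b' where qo: "quotient_of (of_int a / of_int b) = (a', b')" by fastforce
  have b': "b' > 0" using qo by (rule quotient_of_denom_pos)
  have "(of_int a / of_int b :: rat) = of_int a' / of_int b'" using qo by (rule quotient_of_div)
  hence "(of_int a * of_int b' :: rat) = of_int a' * of_int b" using b b'
    by (simp add: field_simps)
  hence e: "a * b' = a' * b" by (metis of_int_eq_iff of_int_mult)
  have ib: "of_int b * (inv_n (nat b) :: 'a) = 1" using inv_n[OF Q, of "nat b"] b by simp
  have ib': "of_int b' * (inv_n (nat b') :: 'a) = 1" using inv_n[OF Q, of "nat b'"] b' by simp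
  have "(ratmap (of_int a / of_int b) :: 'a) = of_int a' * inv_n (nat b')"
    unfolding ratmap_def qo by simp
  also have "\<dots> = of_int a' * inv_n (nat b') * (of_int b * inv_n (nat b))" by (simp add: ib)
  also have "\<dots> = of_int (a' * b) * inv_n (nat b') * inv_n (nat b)" by (simp add: mult_ac)
  also have "\<dots> = of_int (a * b') * inv_n (nat b') * inv_n (nat b)" by (simp only: e)
  also have "\<dots> = of_int a * (of_int b' * inv_n (nat b')) * inv_n (nat b)" by (simp add: mult_ac)
  also have "\<dots> = of_int a * inv_n (nat b)" by (simp add: ib')
  finally show ?thesis .
qed

lemma rat_frac_ex: "\<exists>a b. b > 0 \<and> x = (of_int a / of_int b :: rat)"
proof -
  obtain a b where "quotient_of x = (a, b)" by fastforce
  thus ?thesis using quotient_of_denom_pos quotient_of_div by blast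
qed

lemma ratmap_int:
  assumes Q: "Q_algebra TYPE('a::comm_ring_1)"
  shows "(ratmap (of_int z) :: 'a) = of_int z"
proof -
  have "(ratmap (of_int z / of_int 1) :: 'a) = of_int z * inv_n (nat 1)" by (rule ratmap_frac[OF Q]) simp
  moreover have "(inv_n 1 :: 'a) = 1" by (rule inv_n_unique) simp
  ultimately show ?thesis by simp
qed

lemma ratmap_add:
  assumes Q: "Q_algebra TYPE('a::comm_ring_1)"
  shows "(ratmap (x + y) :: 'a) = ratmap x + ratmap y"
proof -
  obtain a b where x: "b > 0" "x = of_int a / of_int b" using rat_frac_ex by blast
  obtain c d where y: "d > 0" "y = of_int c / of_int d" using rat_frac_ex by blast
  have xy: "x + y = of_int (a * d + c * b) / of_int (b * d)" using x y by (simp add: field_simps)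
  have bd: "b * d > 0" using x y by simp
  have ib: "of_int b * (inv_n (nat b) :: 'a) = 1" using inv_n[OF Q, of "nat b"] x by simp
  have id: "of_int d * (inv_n (nat d) :: 'a) = 1" using inv_n[OF Q, of "nat d"] y by simp
  have m: "(inv_n (nat (b * d)) :: 'a) = inv_n (nat b) * inv_n (nat d)"
    using inv_n_mult[OF Q, of "nat b" "nat d"] x y by (simp add: nat_mult_distrib)
  have "(ratmap (x + y) :: 'a) = of_int (a * d + c * b) * inv_n (nat (b * d))"
    unfolding xy by (rule ratmap_frac[OF Q bd])
  also have "\<dots> = of_int a * inv_n (nat b) * (of_int d * inv_n (nat d))
                 + of_int c * inv_n (nat d) * (of_int b * inv_n (nat b))"
    unfolding m by (simp add: algebra_simps)
  also have "\<dots> = ratmap x + ratmap y"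
    unfolding ib id x(2) y(2) ratmap_frac[OF Q x(1)] ratmap_frac[OF Q y(1)] by (simp only: mult_1_right)
  finally show ?thesis .
qed

lemma ratmap_mult:
  assumes Q: "Q_algebra TYPE('a::comm_ring_1)"
  shows "(ratmap (x * y) :: 'a) = ratmap x * ratmap y"
proof -
  obtain a b where x: "b > 0" "x = of_int a / of_int b" using rat_frac_ex by blast
  obtain c d where y: "d > 0" "y = of_int c / of_int d" using rat_frac_ex by blast
  have xy: "x * y = of_int (a * c) / of_int (b * d)" using x y by simp
  have bd: "b * d > 0" using x y by simp
  have m: "(inv_n (nat (b * d)) :: 'a) = inv_n (nat b) * inv_n (nat d)"
    using inv_n_mult[OF Q, of "nat b" "nat d"] x y by (simp add: nat_mult_distrib)
  have "(ratmap (x * y) :: 'a) = of_int (a * c) * inv_n (nat (b * d))"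
    unfolding xy by (rule ratmap_frac[OF Q bd])
  also have "\<dots> = (of_int a * inv_n (nat b)) * (of_int c * inv_n (nat d))"
    unfolding m by (simp add: mult_ac)
  also have "\<dots> = ratmap x * ratmap y"
    unfolding x(2) y(2) ratmap_frac[OF Q x(1)] ratmap_frac[OF Q y(1)] ..
  finally show ?thesis .
qed

lemma ratmap_0: "Q_algebra TYPE('a::comm_ring_1) \<Longrightarrow> (ratmap 0 :: 'a) = 0"
  using ratmap_int[of 0] by simp
lemma ratmap_1: "Q_algebra TYPE('a::comm_ring_1) \<Longrightarrow> (ratmap 1 :: 'a) = 1"
  using ratmap_int[of 1] by simp
lemma ratmap_uminus: "Q_algebra TYPE('a::comm_ring_1) \<Longrightarrow> (ratmap (- x) :: 'a) = - ratmap x"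
proof -
  assume Q: "Q_algebra TYPE('a::comm_ring_1)"
  have "(ratmap (- x) :: 'a) + ratmap x = 0" using ratmap_add[OF Q, of "- x" x] ratmap_0[OF Q] by simp
  thus ?thesis by (simp add: eq_neg_iff_add_eq_0)
qed
lemma ratmap_inv_fact:
  assumes Q: "Q_algebra TYPE('a::comm_ring_1)"
  shows "(ratmap (1 / fact n) :: 'a) = inv_n (fact n)"
proof -
  have "(ratmap (of_int 1 / of_int (fact n)) :: 'a) = of_int 1 * inv_n (nat (fact n))"
    by (rule ratmap_frac[OF Q]) simp
  moreover have "nat (fact n) = fact n" by (metis nat_int of_nat_fact)
  ultimately show ?thesis by simp
qed




definition E :: "'a::comm_ring_1 \<Rightarrow> rat poly \<Rightarrow> 'a" where
  "E r q = (\<Sum>n\<le>degree q. ratmap (coeff q n) * r ^ n)"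

context
  fixes r :: "'a::comm_ring_1"
  assumes Q: "Q_algebra TYPE('a)"
begin

lemma E_alt: "degree q < N \<Longrightarrow> E r q = (\<Sum>n<N. ratmap (coeff q n) * r ^ n)"
proof -
  assume N: "degree q < N"
  have "E r q = (\<Sum>n<Suc (degree q). ratmap (coeff q n) * r ^ n)"
    unfolding E_def lessThan_Suc_atMost ..
  also have "\<dots> = (\<Sum>n<N. ratmap (coeff q n) * r ^ n)"
  proof (rule sum.mono_neutral_left)
    show "finite {..<N}" by simp
    show "{..<Suc (degree q)} \<subseteq> {..<N}" using N by auto
    show "\<forall>i\<in>{..<N} - {..<Suc (degree q)}. ratmap (coeff q i) * r ^ i = 0"
      using ratmap_0[OF Q] by (auto simp: coeff_eq_0)
  qed
  finally show ?thesis .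
qed

lemma E_add: "E r (p + q) = E r p + E r q"
proof -
  define N where "N = Suc (max (degree p) (degree q))"
  have "degree (p + q) < N" unfolding N_def using degree_add_le_max[of p q] by simp
  hence "E r (p + q) = (\<Sum>n<N. ratmap (coeff (p + q) n) * r ^ n)" by (rule E_alt)
  also have "\<dots> = (\<Sum>n<N. ratmap (coeff p n) * r ^ n) + (\<Sum>n<N. ratmap (coeff q n) * r ^ n)"
    by (simp add: ratmap_add[OF Q] distrib_right sum.distrib)
  also have "\<dots> = E r p + E r q"
    using E_alt[where q=p and N=N] E_alt[where q=q and N=N] unfolding N_def by simp
  finally show ?thesis .
qed

lemma E_smult: "E r (smult c p) = ratmap c * E r p"
proof -
  define N where "N = Suc (degree p)"
  have "degree (smult c p) < N" unfolding N_def by simp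
  hence "E r (smult c p) = (\<Sum>n<N. ratmap (coeff (smult c p) n) * r ^ n)" by (rule E_alt)
  also have "\<dots> = ratmap c * (\<Sum>n<N. ratmap (coeff p n) * r ^ n)"
    by (simp add: ratmap_mult[OF Q] sum_distrib_left mult.assoc)
  also have "\<dots> = ratmap c * E r p" using E_alt[where q=p and N=N] unfolding N_def by simp
  finally show ?thesis .
qed

lemma E_pCons: "E r (pCons a p) = ratmap a + r * E r p"
proof -
  define N where "N = Suc (degree p)"
  have "degree (pCons a p) < Suc N" unfolding N_def using degree_pCons_le[of a p] by simp
  hence "E r (pCons a p) = (\<Sum>n<Suc N. ratmap (coeff (pCons a p) n) * r ^ n)" by (rule E_alt)
  also have "\<dots> = ratmap a + (\<Sum>n<N. ratmap (coeff p n) * r ^ Suc n)"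
    unfolding sum.lessThan_Suc_shift by simp
  also have "\<dots> = ratmap a + r * (\<Sum>n<N. ratmap (coeff p n) * r ^ n)"
    by (simp add: sum_distrib_left mult_ac)
  also have "\<dots> = ratmap a + r * E r p" using E_alt[where q=p and N=N] unfolding N_def by simp
  finally show ?thesis .
qed

lemma E_0: "E r 0 = 0" unfolding E_def using ratmap_0[OF Q] by simp

lemma E_mult: "E r (p * q) = E r p * E r q"
proof (induct p)
  case 0 show ?case by (simp add: E_0)
next
  case (pCons a p)
  have "E r (pCons a p * q) = E r (smult a q + pCons 0 (p * q))" by simp
  also have "\<dots> = ratmap a * E r q + r * (E r p * E r q)"
    unfolding E_add E_smult E_pCons pCons(2) ratmap_0[OF Q] by simp
  also have "\<dots> = E r (pCons a p) * E r q" unfolding E_pCons by (simp add: algebra_simps)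
  finally show ?case .
qed

lemma E_const: "E r [:c:] = ratmap c"
  using E_pCons[of c 0] E_0 by simp
lemma E_1: "E r 1 = 1"
  using E_const[of 1] ratmap_1[OF Q] by (simp add: one_pCons)
lemma E_X: "E r [:0, 1:] = r"
  using E_pCons[of 0 "[:1:]"] E_const[of 1] ratmap_1[OF Q] ratmap_0[OF Q] by simp
lemma E_monom: "E r (monom 1 k) = r ^ k"
proof (induct k)
  case 0 show ?case using E_1 by (simp add: one_pCons monom_0)
next
  case (Suc k) show ?case unfolding monom_Suc E_pCons Suc ratmap_0[OF Q] by simp
qed
lemma E_sum: "E r (\<Sum>i\<in>A. f i) = (\<Sum>i\<in>A. E r (f i))"
  by (induct A rule: infinite_finite_induct) (simp_all add: E_0 E_add)
lemma E_prod: "E r (\<Prod>i\<in>A. f i) = (\<Prod>i\<in>A. E r (f i))"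
  by (induct A rule: infinite_finite_induct) (simp_all add: E_1 E_mult)

lemma E_bpoly: "E r (bpoly i) = binom r i"
proof -
  have "E r (bpoly i) = ratmap (1 / fact i) * (\<Prod>j<i. E r [:- of_nat j, 1:])"
    unfolding bpoly_def E_smult E_prod ..
  also have "(\<Prod>j<i. E r [:- of_nat j, 1:]) = (\<Prod>j<i. r - of_nat j)"
  proof (rule prod.cong)
    fix j
    have "E r [:- of_nat j, 1:] = ratmap (- of_nat j) + r * 1"
      using E_pCons[of "- of_nat j" "[:1:]"] E_const[of 1] ratmap_1[OF Q] by simp
    also have "ratmap (- of_nat j) = (- of_nat j :: 'a)"
      using ratmap_int[OF Q, of "- int j"] by simp
    finally show "E r [:- of_nat j, 1:] = r - of_nat j" by simp
  qed simp
  finally have "E r (bpoly i) = inv_n (fact i) * (\<Prod>j<i. r - of_nat j)"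
    unfolding ratmap_inv_fact[OF Q] .
  moreover have "(THE u. of_nat (fact i) * u = (1::'a)) = inv_n (fact i)" unfolding inv_n_def ..
  ultimately show ?thesis unfolding binom_def by (simp add: mult.commute)
qed

end




lemma sub_sum: "subring_of R \<Longrightarrow> (\<And>i. i \<in> A \<Longrightarrow> f i \<in> R) \<Longrightarrow> (\<Sum>i\<in>A. f i) \<in> R"
  by (induct A rule: infinite_finite_induct) (auto simp: subring_of_def)
lemma sub_power: "subring_of R \<Longrightarrow> x \<in> R \<Longrightarrow> x ^ k \<in> R"
  by (induct k) (auto simp: subring_of_def)
lemma sub_of_nat: "subring_of R \<Longrightarrow> of_nat n \<in> R"
  by (induct n) (auto simp: subring_of_def)
lemma sub_of_int: fixes R :: "'a::comm_ring_1 set" shows "subring_of R \<Longrightarrow> of_int z \<in> R"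
proof (cases "z \<ge> 0")
  case True
  assume R: "subring_of R"
  have "(of_int z :: 'a) = of_nat (nat z)" using True by simp
  thus ?thesis using sub_of_nat[OF R] by simp
next
  case False
  assume R: "subring_of R"
  have "(of_int z :: 'a) = - of_nat (nat (- z))" using False by simp
  thus ?thesis using sub_of_nat[OF R] R unfolding subring_of_def by metis
qed

definition Phi :: "'a::comm_ring_1 \<Rightarrow> 'a \<Rightarrow> rat fls \<Rightarrow> 'a" where
  "Phi r s f = (THE y. \<exists>q k. f = L q k \<and> y = E r q * s ^ k)"

lemma monom_1_1: "monom 1 1 = [:0, 1:]" by (simp add: monom_Suc monom_0 one_pCons)

context
  fixes R :: "'a::comm_ring_1 set" and r s :: 'a
  assumes Q: "Q_algebra TYPE('a)" and BR: "binomial_ring R" and rR: "r \<in> R" and sR: "s \<in> R"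
    and rs: "r * s = 1"
begin

lemma SR: "subring_of R" using BR unfolding binomial_ring_def by simp

lemma E_wd:
  assumes "L q k = L q' k'"
  shows "E r q * s ^ k = E r q' * s ^ k'"
proof -
  have "q * monom 1 k' = q' * monom 1 k" using assms L_eq_iff by blast
  hence e: "E r q * r ^ k' = E r q' * r ^ k"
    using E_mult[OF Q] E_monom[OF Q] by metis
  have "E r q * s ^ k = E r q * s ^ k * (r * s) ^ k'" by (simp add: rs)
  also have "\<dots> = (E r q * r ^ k') * s ^ (k + k')" by (simp add: power_mult_distrib power_add mult_ac)
  also have "\<dots> = (E r q' * r ^ k) * s ^ (k + k')" by (simp only: e)
  also have "\<dots> = E r q' * s ^ k' * (r * s) ^ k" by (simp add: power_mult_distrib power_add mult_ac)
  also have "\<dots> = E r q' * s ^ k'" by (simp add: rs)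
  finally show ?thesis .
qed

lemma Phi_L: "Phi r s (L q k) = E r q * s ^ k"
  unfolding Phi_def
proof (rule the_equality)
  show "\<exists>q' k'. L q k = L q' k' \<and> E r q * s ^ k = E r q' * s ^ k'" by blast
  fix y assume "\<exists>q' k'. L q k = L q' k' \<and> y = E r q' * s ^ k'"
  then obtain q' k' where "L q k = L q' k'" "y = E r q' * s ^ k'" by blast
  thus "y = E r q * s ^ k" using E_wd by metis
qed

lemma E_IV_R:
  assumes q: "q \<in> IV" shows "E r q \<in> R"
proof -
  have qn: "q = (\<Sum>i\<le>degree q. smult (poly ((dlt^^i) q) 0) (bpoly i))" by (rule newton) simp
  have "E r q = (\<Sum>i\<le>degree q. ratmap (poly ((dlt^^i) q) 0) * binom r i)"
    by (subst qn) (simp add: E_sum[OF Q] E_smult[OF Q] E_bpoly[OF Q])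
  also have "\<dots> \<in> R"
  proof (rule sub_sum[OF SR])
    fix i
    obtain z where z: "poly ((dlt^^i) q) 0 = of_int z" using IV_coeffs[OF q, of i] by (blast elim: Ints_cases)
    have "ratmap (poly ((dlt^^i) q) 0) = (of_int z :: 'a)" unfolding z by (rule ratmap_int[OF Q])
    moreover have "(of_int z :: 'a) \<in> R" by (rule sub_of_int[OF SR])
    moreover have "binom r i \<in> R" using BR rR unfolding binomial_ring_def by blast
    ultimately show "ratmap (poly ((dlt^^i) q) 0) * binom r i \<in> R" using SR unfolding subring_of_def by simp
  qed
  finally show ?thesis .
qed

lemma Phi_hom: "ring_hom_on H_ring R (Phi r s)"
  unfolding ring_hom_on_def
proof (intro conjI ballI)
  fix x assume "x \<in> H_ring"
  then obtain q k where x: "x = L q k" "q \<in> IV" unfolding H_ring_eq by blast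
  show "Phi r s x \<in> R" unfolding x Phi_L using E_IV_R[OF x(2)] sub_power[OF SR sR] SR
    unfolding subring_of_def by blast
next
  show "Phi r s 1 = 1" unfolding L_one Phi_L E_1[OF Q] by simp
next
  fix x y assume "x \<in> H_ring" "y \<in> H_ring"
  then obtain q k q' k' where x: "x = L q k" and y: "y = L q' k'" unfolding H_ring_eq by blast
  have rk: "r ^ j * s ^ j = 1" for j by (metis power_mult_distrib rs power_one)
  show "Phi r s (x + y) = Phi r s x + Phi r s y"
  proof -
    have "Phi r s (x + y) = (E r q * r ^ k' + E r q' * r ^ k) * s ^ (k + k')"
      unfolding x y L_add Phi_L E_add[OF Q] E_mult[OF Q] E_monom[OF Q] ..
    also have "\<dots> = E r q * s ^ k * (r ^ k' * s ^ k') + E r q' * s ^ k' * (r ^ k * s ^ k)"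
      by (simp add: power_add algebra_simps)
    also have "\<dots> = Phi r s x + Phi r s y" unfolding rk x y Phi_L by simp
    finally show ?thesis .
  qed
  show "Phi r s (x * y) = Phi r s x * Phi r s y"
    unfolding x y L_mult Phi_L E_mult[OF Q] by (simp add: power_add mult_ac)
qed

lemma Phi_X: "Phi r s fls_X = r"
  unfolding L_X Phi_L E_X[OF Q] by simp

end




lemma H_of_nat: "(of_nat n :: rat fls) \<in> H_ring" by (rule sub_of_nat[OF H_subring])
lemma H_of_int: "(of_int z :: rat fls) \<in> H_ring" by (rule sub_of_int[OF H_subring])
lemma H_L: "q \<in> IV \<Longrightarrow> L q k \<in> H_ring" unfolding H_ring_eq by blast
lemma H_X: "fls_X \<in> H_ring" unfolding L_X using H_L[OF IV_X] .
lemma H_Xinv: "fls_X_inv \<in> H_ring" unfolding L_Xinv using H_L[OF IV_1] .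
lemma X_Xinv: "fls_X * fls_X_inv = (1 :: rat fls)"
proof -
  have "fls_X * fls_X_inv = L ([:0, 1:] * 1) (0 + 1)" unfolding L_X L_Xinv L_mult ..
  also have "\<dots> = L (1 * monom 1 1) (0 + 1)" by (simp only: monom_1_1 mult_1_left mult_1_right)
  also have "\<dots> = L 1 0" by (rule L_pad)
  finally show ?thesis by (simp add: L_one)
qed
lemma L_k: "L q k = L q 0 * fls_X_inv ^ k" unfolding L_def by simp

context
  fixes R :: "'a::comm_ring_1 set" and r s :: 'a and \<phi> :: "rat fls \<Rightarrow> 'a"
  assumes Q: "Q_algebra TYPE('a)" and BR: "binomial_ring R" and rR: "r \<in> R" and sR: "s \<in> R"
    and rs: "r * s = 1"
    and hom: "ring_hom_on H_ring R \<phi>" and phX: "\<phi> fls_X = r"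
begin

lemma HS: "subring_of H_ring" by (rule H_subring)
lemma H_add: "x \<in> H_ring \<Longrightarrow> y \<in> H_ring \<Longrightarrow> x + y \<in> H_ring" using HS unfolding subring_of_def by blast
lemma H_mult: "x \<in> H_ring \<Longrightarrow> y \<in> H_ring \<Longrightarrow> x * y \<in> H_ring" using HS unfolding subring_of_def by blast
lemma H_uminus: "x \<in> H_ring \<Longrightarrow> - x \<in> H_ring" using HS unfolding subring_of_def by blast
lemma H_0: "0 \<in> H_ring" using HS unfolding subring_of_def by blast
lemma H_1: "1 \<in> H_ring" using HS unfolding subring_of_def by blast

lemma ph_add: "x \<in> H_ring \<Longrightarrow> y \<in> H_ring \<Longrightarrow> \<phi> (x + y) = \<phi> x + \<phi> y"
  using hom unfolding ring_hom_on_def by blast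
lemma ph_mult: "x \<in> H_ring \<Longrightarrow> y \<in> H_ring \<Longrightarrow> \<phi> (x * y) = \<phi> x * \<phi> y"
  using hom unfolding ring_hom_on_def by blast
lemma ph_1: "\<phi> 1 = 1" using hom unfolding ring_hom_on_def by blast
lemma ph_0: "\<phi> 0 = 0"
proof -
  have "\<phi> (0 + 0) = \<phi> 0 + \<phi> 0" by (rule ph_add[OF H_0 H_0])
  thus ?thesis by simp
qed
lemma ph_uminus: "x \<in> H_ring \<Longrightarrow> \<phi> (- x) = - \<phi> x"
proof -
  assume x: "x \<in> H_ring"
  have "\<phi> (x + - x) = \<phi> x + \<phi> (- x)" by (rule ph_add[OF x H_uminus[OF x]])
  hence "\<phi> x + \<phi> (- x) = 0" using ph_0 by simp
  thus ?thesis by (simp add: eq_neg_iff_add_eq_0 add.commute)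
qed
lemma ph_of_nat: "\<phi> (of_nat n) = of_nat n"
proof (induct n)
  case 0 show ?case using ph_0 by simp
next
  case (Suc n)
  have "\<phi> (of_nat (Suc n)) = \<phi> (1 + of_nat n)" by simp
  also have "\<dots> = 1 + of_nat n" using ph_add[OF H_1 H_of_nat] ph_1 Suc by simp
  finally show ?case by simp
qed
lemma ph_of_int: "\<phi> (of_int z) = of_int z"
proof (cases "z \<ge> 0")
  case True
  hence "(of_int z :: rat fls) = of_nat (nat z)" "(of_int z :: 'a) = of_nat (nat z)" by simp_all
  thus ?thesis using ph_of_nat by simp
next
  case False
  hence "(of_int z :: rat fls) = - of_nat (nat (- z))" "(of_int z :: 'a) = - of_nat (nat (- z))" by simp_all
  thus ?thesis using ph_of_nat ph_uminus[OF H_of_nat] by simp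
qed
lemma ph_Xinv: "\<phi> fls_X_inv = s"
proof -
  have "r * \<phi> fls_X_inv = 1" using ph_mult[OF H_X H_Xinv] X_Xinv ph_1 phX by simp
  hence "s * (r * \<phi> fls_X_inv) = s" by simp
  thus ?thesis using rs by (simp add: mult.assoc[symmetric] mult.commute[of s r])
qed
lemma H_power: "x \<in> H_ring \<Longrightarrow> x ^ k \<in> H_ring" by (rule sub_power[OF HS])
lemma ph_power: "x \<in> H_ring \<Longrightarrow> \<phi> (x ^ k) = \<phi> x ^ k"
proof (induct k)
  case 0 show ?case using ph_1 by simp
next
  case (Suc k)
  thus ?case using ph_mult[OF Suc(2) H_power[OF Suc(2)]] by simp
qed
lemma ph_sum: "finite A \<Longrightarrow> (\<And>i. i \<in> A \<Longrightarrow> f i \<in> H_ring) \<Longrightarrow> \<phi> (\<Sum>i\<in>A. f i) = (\<Sum>i\<in>A. \<phi> (f i))"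
proof (induct A rule: finite_induct)
  case empty show ?case using ph_0 by simp
next
  case (insert x F)
  have "(\<Sum>i\<in>F. f i) \<in> H_ring" using insert(4) by (intro sub_sum[OF HS]) auto
  thus ?case using insert ph_add[of "f x" "\<Sum>i\<in>F. f i"] by simp
qed
lemma ph_prod: "(\<And>i. i \<in> A \<Longrightarrow> f i \<in> H_ring) \<Longrightarrow> \<phi> (\<Prod>i\<in>A. f i) = (\<Prod>i\<in>A. \<phi> (f i))"
proof (induct A rule: infinite_finite_induct)
  case (infinite A) thus ?case using ph_1 by simp
next
  case empty show ?case using ph_1 by simp
next
  case (insert x F)
  have "(\<Prod>i\<in>F. f i) \<in> H_ring"
  proof -
    have "\<And>A. finite A \<Longrightarrow> A \<subseteq> F \<Longrightarrow> (\<Prod>i\<in>A. f i) \<in> H_ring"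
    proof -
      fix A assume "finite A" "A \<subseteq> F"
      thus "(\<Prod>i\<in>A. f i) \<in> H_ring"
        by (induct A rule: finite_induct) (use insert(4) H_1 H_mult in auto)
    qed
    thus ?thesis using insert(1) by blast
  qed
  thus ?case using insert ph_mult[of "f x" "\<Prod>i\<in>F. f i"] by simp
qed

lemma ph_bpoly: "\<phi> (L (bpoly i) 0) = binom r i"
proof -
  define B where "B = L (bpoly i) 0"
  have BH: "B \<in> H_ring" unfolding B_def by (rule H_L[OF IV_bpoly])
  have f: "fact i \<noteq> (0::rat)" by simp
  have "of_nat (fact i) * B = L (smult (of_nat (fact i)) (bpoly i)) 0"
    unfolding B_def fls_of_nat L_const_mult ..
  also have "smult (of_nat (fact i)) (bpoly i) = (\<Prod>j<i. [:- of_nat j, 1:])"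
    unfolding bpoly_def using f by simp
  also have "L (\<Prod>j<i. [:- of_nat j, 1:]) 0 = (\<Prod>j<i. L [:- of_nat j, 1:] 0)"
    using prod_L[of "\<lambda>j. [:- of_nat j, 1:]" 0 i] by simp
  also have "\<dots> = (\<Prod>j<i. fls_X - of_nat j)"
  proof (rule prod.cong)
    fix j
    have a: "L [:- of_nat j, 1:] 0 = L [:0, 1:] 0 + L [:- of_nat j:] 0"
      unfolding L_add_same by simp
    have b: "L [:- of_nat j:] 0 = - (of_nat j :: rat fls)"
      unfolding L_const[symmetric] fls_of_nat by (rule fls_const_uminus)
    have "L [:- of_nat j, 1:] 0 = fls_X - of_nat j" unfolding a b L_X[symmetric] by simp
    thus "L [:- of_nat j, 1:] 0 = fls_X - of_nat j" .
  qed simp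
  finally have e: "of_nat (fact i) * B = (\<Prod>j<i. fls_X - of_nat j)" .
  have "of_nat (fact i) * \<phi> B = \<phi> (of_nat (fact i) * B)"
    by (simp only: ph_mult[OF H_of_nat BH] ph_of_nat)
  also have "\<dots> = (\<Prod>j<i. \<phi> (fls_X - of_nat j))"
    unfolding e by (rule ph_prod) (simp only: diff_conv_add_uminus, rule H_add[OF H_X H_uminus[OF H_of_nat]])
  also have "\<dots> = (\<Prod>j<i. r - of_nat j)"
  proof (rule prod.cong)
    fix j
    show "\<phi> (fls_X - of_nat j) = r - of_nat j"
      unfolding diff_conv_add_uminus
      by (simp only: ph_add[OF H_X H_uminus[OF H_of_nat]] ph_uminus[OF H_of_nat] ph_of_nat phX)
  qed simp
  finally have e2: "of_nat (fact i) * \<phi> B = (\<Prod>j<i. r - of_nat j)" .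
  have iv: "inv_n (fact i) * of_nat (fact i) = (1::'a)" using inv_n[OF Q, of "fact i"] by (simp add: mult.commute)
  have "\<phi> B = inv_n (fact i) * (of_nat (fact i) * \<phi> B)" by (simp add: mult.assoc[symmetric] iv)
  also have "\<dots> = binom r i" unfolding e2 binom_def inv_n_def by (simp add: mult.commute)
  finally show ?thesis unfolding B_def .
qed

lemma ph_L0:
  assumes q: "q \<in> IV" shows "\<phi> (L q 0) = E r q"
proof -
  define c where "c i = poly ((dlt^^i) q) 0" for i
  define D where "D = degree q"
  have "\<forall>i. \<exists>z. c i = of_int z" unfolding c_def using IV_coeffs[OF q] by (blast elim: Ints_cases)
  then obtain z where z: "\<And>i. c i = of_int (z i)" by metis
  have qn: "q = (\<Sum>i\<le>D. smult (c i) (bpoly i))" unfolding c_def D_def by (rule newton) simp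
  have "L q 0 = L (\<Sum>i\<le>D. smult (c i) (bpoly i)) 0" using qn by (rule arg_cong)
  also have "\<dots> = (\<Sum>i\<le>D. L (smult (c i) (bpoly i)) 0)" by (rule L_sum[symmetric]) simp
  also have "\<dots> = (\<Sum>i\<le>D. of_int (z i) * L (bpoly i) 0)"
  proof (rule sum.cong)
    fix i
    show "L (smult (c i) (bpoly i)) 0 = of_int (z i) * L (bpoly i) 0"
      unfolding L_const_mult[symmetric] z fls_of_int ..
  qed simp
  finally have e: "L q 0 = (\<Sum>i\<le>D. of_int (z i) * L (bpoly i) 0)" .
  have "\<phi> (L q 0) = (\<Sum>i\<le>D. \<phi> (of_int (z i) * L (bpoly i) 0))"
    unfolding e by (rule ph_sum) (simp_all only: finite_atMost H_mult[OF H_of_int H_L[OF IV_bpoly]])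
  also have "\<dots> = (\<Sum>i\<le>D. of_int (z i) * binom r i)"
  proof (rule sum.cong)
    fix i
    show "\<phi> (of_int (z i) * L (bpoly i) 0) = of_int (z i) * binom r i"
      unfolding ph_mult[OF H_of_int H_L[OF IV_bpoly]] ph_of_int ph_bpoly ..
  qed simp
  also have "\<dots> = (\<Sum>i\<le>D. ratmap (c i) * E r (bpoly i))"
  proof (rule sum.cong)
    fix i
    show "of_int (z i) * binom r i = ratmap (c i) * E r (bpoly i)"
      unfolding z ratmap_int[OF Q] E_bpoly[OF Q] ..
  qed simp
  also have "\<dots> = E r (\<Sum>i\<le>D. smult (c i) (bpoly i))"
    unfolding E_sum[OF Q] E_smult[OF Q] ..
  also have "\<dots> = E r q" using qn by (rule arg_cong[symmetric])
  finally show ?thesis .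
qed

lemma ph_L: assumes q: "q \<in> IV" shows "\<phi> (L q k) = E r q * s ^ k"
proof -
  have "\<phi> (L q 0 * fls_X_inv ^ k) = \<phi> (L q 0) * \<phi> (fls_X_inv ^ k)"
    by (rule ph_mult[OF H_L[OF q] H_power[OF H_Xinv]])
  thus ?thesis unfolding L_k[of q k] ph_power[OF H_Xinv] ph_Xinv ph_L0[OF q] .
qed

end




lemma Q_fls: "Q_algebra TYPE(rat fls)"
  unfolding Q_algebra_def
proof (intro allI impI)
  fix n :: nat assume n: "n > 0"
  have "(of_nat n :: rat fls) * fls_const (1 / of_nat n) = fls_const (of_nat n * (1 / of_nat n))"
    unfolding fls_of_nat fls_const_mult_const ..
  also have "\<dots> = 1" using n by simp
  finally show "\<exists>u::rat fls. of_nat n * u = 1" by blast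
qed

lemma hopf_H: "hopf_subalgebra H_ring"
  unfolding hopf_subalgebra_def
  using H_sub H_subring coprod_H counit_H antipode_H by blast

theorem theorem1p3:
  shows "hopf_subalgebra H_ring \<and> Q_algebra TYPE(rat fls) \<and> binomial_ring H_ring \<and>
    (\<forall>(R::'a::comm_ring_1 set) r. Q_algebra TYPE('a) \<and> binomial_ring R \<and> r \<in> R \<and>
        (\<exists>s\<in>R. r * s = 1) \<longrightarrow>
      (\<exists>\<phi>. ring_hom_on H_ring R \<phi> \<and> \<phi> fls_X = r) \<and>
      (\<forall>\<phi> \<psi>. ring_hom_on H_ring R \<phi> \<and> \<phi> fls_X = r \<and>
               ring_hom_on H_ring R \<psi> \<and> \<psi> fls_X = r \<longrightarrow> (\<forall>h\<in>H_ring. \<phi> h = \<psi> h)))"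
proof -
  have U: "\<And>(R::'a::comm_ring_1 set) r. Q_algebra TYPE('a) \<and> binomial_ring R \<and> r \<in> R \<and>
        (\<exists>s\<in>R. r * s = 1) \<Longrightarrow>
      (\<exists>\<phi>. ring_hom_on H_ring R \<phi> \<and> \<phi> fls_X = r) \<and>
      (\<forall>\<phi> \<psi>. ring_hom_on H_ring R \<phi> \<and> \<phi> fls_X = r \<and>
               ring_hom_on H_ring R \<psi> \<and> \<psi> fls_X = r \<longrightarrow> (\<forall>h\<in>H_ring. \<phi> h = \<psi> h))"
  proof -
  fix R :: "'a::comm_ring_1 set" and r :: 'a
  assume A: "Q_algebra TYPE('a) \<and> binomial_ring R \<and> r \<in> R \<and> (\<exists>s\<in>R. r * s = 1)"
  hence Q: "Q_algebra TYPE('a)" and BR: "binomial_ring R" and rR: "r \<in> R" by auto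
  from A obtain s where sR: "s \<in> R" and rs: "r * s = 1" by blast
  show "(\<exists>\<phi>. ring_hom_on H_ring R \<phi> \<and> \<phi> fls_X = r) \<and> (\<forall>\<phi> \<psi>. ring_hom_on H_ring R \<phi> \<and> \<phi> fls_X = r \<and>
               ring_hom_on H_ring R \<psi> \<and> \<psi> fls_X = r \<longrightarrow> (\<forall>h\<in>H_ring. \<phi> h = \<psi> h))"
  proof
  show "\<exists>\<phi>. ring_hom_on H_ring R \<phi> \<and> \<phi> fls_X = r"
    using Phi_hom[OF Q BR rR sR rs] Phi_X[OF Q BR rR sR rs] by blast
  show "\<forall>\<phi> \<psi>. ring_hom_on H_ring R \<phi> \<and> \<phi> fls_X = r \<and>
               ring_hom_on H_ring R \<psi> \<and> \<psi> fls_X = r \<longrightarrow> (\<forall>h\<in>H_ring. \<phi> h = \<psi> h)"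
  proof (intro allI impI ballI)
    fix \<phi> \<psi> :: "rat fls \<Rightarrow> 'a" and h
    assume H: "ring_hom_on H_ring R \<phi> \<and> \<phi> fls_X = r \<and> ring_hom_on H_ring R \<psi> \<and> \<psi> fls_X = r"
      and h: "h \<in> H_ring"
    from h obtain q k where hq: "h = L q k" "q \<in> IV" unfolding H_ring_eq by blast
    have "\<phi> h = E r q * s ^ k" unfolding hq(1)
      by (rule ph_L[OF Q BR rR sR rs]) (use H hq in auto)
    moreover have "\<psi> h = E r q * s ^ k" unfolding hq(1)
      by (rule ph_L[OF Q BR rR sR rs]) (use H hq in auto)
    ultimately show "\<phi> h = \<psi> h" by simp
  qed
  qed
  qed
  show ?thesis using hopf_H Q_fls binomial_H U by blast
qed


end
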